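(* Let $\varrho$ be the golden mean substitution on the alphabet $\{A,B\}$, $\varrho(A)=AB$, $\varrho(B)=A$, and let $\mathcal{F}_n=\varrho^n(A)$ for $n\ge 0$ (so $\mathcal{F}_{n+1}=\mathcal{F}_n\mathcal{F}_{n-1}$ for $n\ge1$), and let $\mathcal{F}_\infty$ be the infinite Fibonacci word, the limit of $\mathcal{F}_n$ (each $\mathcal{F}_n$ being a prefix of $\mathcal{F}_{n+1}$). Let $\mathcal{S}$ be a finite subword (a block of consecutive, whole letters) of $\mathcal{F}_\infty$. Then for every $n\ge 1$ with $|\mathcal{S}|\le|\mathcal{F}_{n-1}|$, $\mathcal{S}$ occurs as a subword of the bi-infinite periodic word $\cdots\mathcal{F}_n\mathcal{F}_n\mathcal{F}_n\cdots$ obtained by repeating $\mathcal{F}_n$ periodically.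
   Context: For a finite word $w$, $|w|$ denotes its number of letters (tiles). *)

theory Defs
  imports Main
begin

datatype letter = A | B

fun rho_letter :: "letter \<Rightarrow> letter list" where
  "rho_letter A = [A, B]"
| "rho_letter B = [A]"

definition rho :: "letter list \<Rightarrow> letter list" where
  "rho w = concat (map rho_letter w)"

definition Fib :: "nat \<Rightarrow> letter list" where
  "Fib n = (rho ^^ n) [A]"

definition Finf :: "nat \<Rightarrow> letter" where
  "Finf i = (THE c. \<exists>N. \<forall>n\<ge>N. i < length (Fib n) \<and> Fib n ! i = c)"

definition subword_Finf :: "letter list \<Rightarrow> bool" where
  "subword_Finf S \<longleftrightarrow> (\<exists>k. \<forall>i<length S. S ! i = Finf (k + i))"

text \<open>The bi-infinite periodic word ... w w w ..., indexed by the integers,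
  with position 0 being the first letter of one copy of w.\<close>
definition periodic_word :: "letter list \<Rightarrow> int \<Rightarrow> letter" where
  "periodic_word w j = w ! nat (j mod int (length w))"

definition subword_periodic :: "letter list \<Rightarrow> letter list \<Rightarrow> bool" where
  "subword_periodic S w \<longleftrightarrow> (\<exists>k::int. \<forall>i<length S. S ! i = periodic_word w (k + int i))"

end

theory Submission
  imports Defs "HOL-Library.Sublist"
begin

lemma rho_append: "rho (x @ y) = rho x @ rho y"
  by (simp add: rho_def)

lemma rhopow_append: "(rho ^^ n) (x @ y) = (rho ^^ n) x @ (rho ^^ n) y"
  by (induction n) (simp_all add: rho_append)

lemma rhopow_concat: "(rho ^^ n) w = concat (map (\<lambda>c. (rho ^^ n) [c]) w)"
proof (induction w)
  case Nil
  then show ?case by (induction n) (simp_all add: rho_def)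
next
  case (Cons c w)
  then show ?case using rhopow_append[of n "[c]" w] by simp
qed

lemma Fib_Suc: "Fib (Suc n) = rho (Fib n)"
  by (simp add: Fib_def)

lemma Fib_0: "Fib 0 = [A]" by (simp add: Fib_def)
lemma Fib_1: "Fib (Suc 0) = [A,B]" by (simp add: Fib_def rho_def)

lemma Fib_SS: "Fib (Suc (Suc n)) = Fib (Suc n) @ Fib n"
proof (induction n)
  case 0
  then show ?case by (simp add: Fib_def rho_def)
next
  case (Suc n)
  have "Fib (Suc (Suc (Suc n))) = rho (Fib (Suc (Suc n)))" by (rule Fib_Suc)
  also have "\<dots> = rho (Fib (Suc n)) @ rho (Fib n)" using Suc by (simp add: rho_append)
  finally show ?case by (simp add: Fib_Suc)
qed

lemma Fib_prefix_Suc: "\<exists>r. Fib (Suc n) = Fib n @ r"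
proof (cases n)
  case 0 then show ?thesis by (simp add: Fib_0 Fib_1)
next
  case (Suc k) then show ?thesis using Fib_SS[of k] by auto
qed

lemma Fib_prefix: "n \<le> m \<Longrightarrow> \<exists>r. Fib m = Fib n @ r"
proof (induction m)
  case 0 then show ?case by simp
next
  case (Suc m)
  show ?case
  proof (cases "n = Suc m")
    case True then show ?thesis by simp
  next
    case False
    then have "n \<le> m" using Suc.prems by simp
    then obtain r where "Fib m = Fib n @ r" using Suc.IH by blast
    moreover obtain r' where "Fib (Suc m) = Fib m @ r'" using Fib_prefix_Suc by blast
    ultimately show ?thesis by auto
  qed
qed

lemma Fib_len: "length (Fib n) \<ge> n + 1"
proof (induction n rule: nat_less_induct)
  case (1 n)
  show ?case
  proof (cases n)
    case 0 then show ?thesis by (simp add: Fib_0)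
  next
    case (Suc k)
    show ?thesis
    proof (cases k)
      case 0 then show ?thesis using Suc by (simp add: Fib_1)
    next
      case (Suc j)
      have "length (Fib j) \<ge> j + 1" using 1 \<open>n = Suc k\<close> Suc by simp
      moreover have "length (Fib k) \<ge> k + 1" using 1 \<open>n = Suc k\<close> by simp
      ultimately show ?thesis using Fib_SS[of j] \<open>n = Suc k\<close> Suc by simp
    qed
  qed
qed

lemma Finf_eq: assumes "i < length (Fib m)" shows "Finf i = Fib m ! i"
  unfolding Finf_def
proof (rule the_equality)
  show "\<exists>N. \<forall>n\<ge>N. i < length (Fib n) \<and> Fib n ! i = Fib m ! i"
  proof (intro exI allI impI)
    fix n assume "m \<le> n"
    then obtain r where "Fib n = Fib m @ r" using Fib_prefix by blast
    then show "i < length (Fib n) \<and> Fib n ! i = Fib m ! i" using assms by (simp add: nth_append)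
  qed
next
  fix c assume "\<exists>N. \<forall>n\<ge>N. i < length (Fib n) \<and> Fib n ! i = c"
  then obtain N where N: "\<forall>n\<ge>N. i < length (Fib n) \<and> Fib n ! i = c" by blast
  let ?n = "max N m"
  obtain r where "Fib ?n = Fib m @ r" using Fib_prefix[of m ?n] by auto
  then show "c = Fib m ! i" using N[rule_format, of ?n] assms by (simp add: nth_append)
qed

lemma rhopow_A: "(rho ^^ n) [A] = Fib n" by (simp add: Fib_def)
lemma rhopow_B: "(rho ^^ Suc k) [B] = Fib k"
  by (simp add: Fib_def funpow_Suc_right rho_def del: funpow.simps)

lemma blocks_lemma:
  assumes "concat bs @ P = u @ S @ v" "length S \<le> length P"
    "\<forall>b\<in>set bs. \<exists>r. b = P @ r"
  shows "sublist S P \<or> (\<exists>b\<in>set bs. \<exists>j<length b. S = take (length S) (drop j (b @ P)))"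
  using assms
proof (induction bs arbitrary: u)
  case Nil
  then show ?case by (auto simp: sublist_def)
next
  case (Cons b bs)
  show ?case
  proof (cases "length u < length b")
    case True
    obtain t where t: "concat bs @ P = P @ t"
    proof (cases bs)
      case Nil then show ?thesis using that by simp
    next
      case (Cons b' bs')
      then obtain r where "b' = P @ r" using Cons.prems(3) by auto
      then show ?thesis using that Cons by auto
    qed
    have eq: "(b @ P) @ t = u @ S @ v" using Cons.prems(1) t by simp
    have "S = take (length S) (drop (length u) ((b @ P) @ t))" using eq by simp
    also have "\<dots> = take (length S) (drop (length u) (b @ P))"
      using True Cons.prems(2) by (simp add: take_append)
    finally have "S = take (length S) (drop (length u) (b @ P))" .
    then show ?thesis using True list.set_intros(1)[of b bs] by blast
  next
    case False
    have eqb: "b @ (concat bs @ P) = u @ (S @ v)" using Cons.prems(1) by simp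
    have "take (length b) (b @ (concat bs @ P)) = take (length b) (u @ (S @ v))"
      by (simp only: eqb)
    then have "take (length b) u = b" using False by simp
    then have "u = b @ drop (length b) u" by (metis append_take_drop_id)
    then obtain u' where "u = b @ u'" by blast
    then have "concat bs @ P = u' @ S @ v" using eqb by simp
    moreover have "\<forall>b\<in>set bs. \<exists>r. b = P @ r" using Cons.prems(3) by simp
    ultimately have "sublist S P \<or> (\<exists>b\<in>set bs. \<exists>j<length b. S = take (length S) (drop j (b @ P)))"
      using Cons.IH[of u'] Cons.prems(2) by blast
    then show ?thesis by (meson list.set_intros(2))
  qed
qed

lemma sublist_take_drop: "sublist (take l (drop j w)) w"
  by (rule sublist_order.order.trans[OF sublist_take sublist_drop])

lemma periodic_of_sublist:
  assumes "sublist S (F @ F)"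
  shows "subword_periodic S F"
proof -
  obtain p s where ps: "F @ F = p @ S @ s" using assms by (auto simp: sublist_def)
  show ?thesis unfolding subword_periodic_def
  proof (intro exI allI impI)
    fix i assume i: "i < length S"
    have "length (F @ F) = length (p @ S @ s)" using ps by simp
    then have j: "length p + i < 2 * length F" using i by simp
    have "S ! i = (F @ F) ! (length p + i)" using ps i by (simp add: nth_append)
    also have "\<dots> = F ! ((length p + i) mod length F)"
    proof (cases "length p + i < length F")
      case True then show ?thesis by (simp add: nth_append)
    next
      case False
      then have "(length p + i) mod length F = length p + i - length F"
        using j False by (simp add: le_mod_geq)
      then show ?thesis using False by (simp add: nth_append)
    qed
    also have "\<dots> = periodic_word F (int (length p) + int i)"
    proof -
      have "(int (length p) + int i) mod int (length F) = int ((length p + i) mod length F)"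
        by (simp add: of_nat_mod)
      then show ?thesis unfolding periodic_word_def by simp
    qed
    finally show "S ! i = periodic_word F (int (length p) + int i)" .
  qed
qed

theorem lemma3p6:
  fixes S :: "letter list" and n :: nat
  assumes "subword_Finf S"
    and "n \<ge> 1"
    and "length S \<le> length (Fib (n - 1))"
  shows "subword_periodic S (Fib n)"
proof -
  obtain k where k: "\<forall>i<length S. S ! i = Finf (k + i)"
    using assms(1) unfolding subword_Finf_def by blast
  define m where "m = k + length S + n"
  have lm: "k + length S \<le> length (Fib m)" using Fib_len[of m] m_def by simp
  have "S = take (length S) (drop k (Fib m))"
    by (rule nth_equalityI) (use lm k Finf_eq in auto)
  then have "sublist S (Fib m)" using sublist_take_drop[of "length S" k "Fib m"] by argo
  then obtain u v where uv: "Fib m = u @ S @ v" by (auto simp: sublist_def)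
  obtain n' where n': "n = Suc n'" using assms(2) by (cases n) auto
  define bs where "bs = map (\<lambda>c. (rho ^^ n) [c]) (Fib (m - n))"
  have "(rho ^^ n) ((rho ^^ (m - n)) [A]) = (rho ^^ (n + (m - n))) [A]"
    by (simp add: funpow_add)
  moreover have "n + (m - n) = m" using m_def by simp
  ultimately have Fm: "Fib m = concat bs"
    unfolding bs_def Fib_def by (simp add: rhopow_concat[symmetric])
  have blocks: "\<forall>b\<in>set bs. b = Fib n \<or> b = Fib n'"
  proof
    fix b assume "b \<in> set bs"
    then obtain c where "b = (rho ^^ n) [c]" unfolding bs_def by auto
    then show "b = Fib n \<or> b = Fib n'" by (cases c) (simp_all add: n' rhopow_A rhopow_B del: funpow.simps)
  qed
  have pre: "\<exists>r. Fib n = Fib n' @ r" using Fib_prefix_Suc n' by blast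
  have bP: "\<forall>b\<in>set bs. \<exists>r. b = Fib n' @ r" using blocks pre by auto
  have "concat bs @ Fib n' = u @ S @ (v @ Fib n')" using uv Fm by simp
  have cases: "sublist S (Fib n') \<or> (\<exists>b\<in>set bs. \<exists>j<length b. S = take (length S) (drop j (b @ Fib n')))"
  proof -
    have "length S \<le> length (Fib n')" using assms(3) n' by simp
    then show ?thesis using blocks_lemma[OF \<open>concat bs @ Fib n' = u @ S @ (v @ Fib n')\<close> _ bP] by blast
  qed
  have "sublist S (Fib n @ Fib n)"
  proof -
    { assume a1: "sublist S (Fib n')"
      obtain r where r: "Fib n = Fib n' @ r" using pre by blast
      from r have "sublist (Fib n') (Fib n @ Fib n)" by simp
      with a1 have ?thesis by (rule sublist_order.order.trans) }
    note H1 = this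
    { assume "\<exists>j<length (Fib n). S = take (length S) (drop j (Fib n @ Fib n'))"
      then obtain j where jj: "S = take (length S) (drop j (Fib n @ Fib n'))" by blast
      have a1: "sublist S (Fib n @ Fib n')" using jj sublist_take_drop[of "length S" j "Fib n @ Fib n'"] by argo
      obtain r where r: "Fib n = Fib n' @ r" using pre by blast
      have "Fib n @ Fib n = (Fib n @ Fib n') @ r" using r by simp
      then have "sublist (Fib n @ Fib n') (Fib n @ Fib n)" by (simp only: sublist_append_rightI)
      with a1 have ?thesis by (rule sublist_order.order.trans) }
    note H2 = this
    { assume "\<exists>j<length (Fib n'). S = take (length S) (drop j (Fib n' @ Fib n'))"
      then obtain j where j: "j < length (Fib n')" "S = take (length S) (drop j (Fib n' @ Fib n'))" by blast
      have ?thesis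
      proof (cases "n' \<ge> 2")
        case True
        define q where "q = n' - 2"
        have q: "n' = Suc (Suc q)" using True q_def by simp
        have e1: "Fib n' @ Fib n' = Fib n @ Fib q"
          using n' q Fib_SS[of q] Fib_SS[of "Suc q"] by simp
        obtain r where e2: "Fib n = Fib q @ r" using Fib_prefix[of q n] n' q by auto
        from e1 have "(Fib n' @ Fib n') @ r = (Fib n @ Fib q) @ r" by (rule arg_cong)
        also have "\<dots> = Fib n @ Fib n" using e2 by simp
        finally have "Fib n @ Fib n = (Fib n' @ Fib n') @ r" by (rule sym)
        then have "sublist (Fib n' @ Fib n') (Fib n @ Fib n)" by (simp only: sublist_append_rightI)
        moreover have "sublist S (Fib n' @ Fib n')" using j(2) sublist_take_drop[of "length S" j "Fib n' @ Fib n'"] by argo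
        ultimately show ?thesis using sublist_order.order.trans by blast
      next
        case False
        then have "n' = 0 \<or> n' = 1" by auto
        then show ?thesis
        proof
          assume h: "n' = 0"
          then have l: "length S \<le> 1" "j = 0" using assms(3) n' j(1) by (simp_all add: Fib_0)
          have e: "drop j (Fib n' @ Fib n') = [A, A]" using h l(2) by (simp add: Fib_0)
          have Se: "S = take (length S) [A, A]" using j(2) e by argo
          have "sublist (take (length S) [A, A]) [A,B,A,B]"
            using l(1) by (cases "length S") (simp_all add: sublist_Cons_right)
          then show ?thesis using h n' by (simp add: Fib_1 flip: Se)
        next
          assume h: "n' = 1"
          then have "length S \<le> 2" "j < 2" using assms(3) n' j(1) by (simp_all add: Fib_1)
          then have l: "length S = 0 \<or> length S = 1 \<or> length S = 2" "j = 0 \<or> j = 1" by arith+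
          have F2: "Fib (Suc (Suc 0)) = [A,B,A]" using Fib_SS[of 0] by (simp add: Fib_0 Fib_1)
          have e: "Fib n' @ Fib n' = [A,B,A,B]" using h by (simp add: Fib_1)
          have Se: "S = take (length S) (drop j [A,B,A,B])" using j(2) e by argo
          have "sublist (take (length S) (drop j [A,B,A,B])) [A,B,A,A,B,A]"
            using l by (elim disjE) (simp_all add: sublist_Cons_right)
          then show ?thesis using h n' F2 by (simp flip: Se)
        qed
      qed }
    note H3 = this
    from cases show ?thesis
    proof
      assume "sublist S (Fib n')" then show ?thesis by (rule H1)
    next
      assume "\<exists>b\<in>set bs. \<exists>j<length b. S = take (length S) (drop j (b @ Fib n'))"
      then obtain b j where b: "b \<in> set bs" "j < length b" "S = take (length S) (drop j (b @ Fib n'))"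
        by blast
      from blocks b(1) have "b = Fib n \<or> b = Fib n'" by blast
      then show ?thesis
      proof
        assume hb: "b = Fib n"
        have "j < length (Fib n)" using b(2) hb by simp
        moreover have "S = take (length S) (drop j (Fib n @ Fib n'))" using b(3) hb by argo
        ultimately show ?thesis using H2 by blast
      next
        assume hb: "b = Fib n'"
        have "j < length (Fib n')" using b(2) hb by simp
        moreover have "S = take (length S) (drop j (Fib n' @ Fib n'))" using b(3) hb by argo
        ultimately show ?thesis using H3 by blast
      qed
    qed
  qed
  then show ?thesis by (rule periodic_of_sublist)
qed

end
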